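(* Let $T$ be a leaf-positive ultrametric tree of radius $1$ with $n$ leaves, let $D$ be its leaf distance matrix, and let $c_T$ be the smallest nonnegative real number $c$ such that $c\,\mathbf{1}_{n\times n}-\frac12D$ is positive semidefinite. Then $c_T=1-\frac1n$ if and only if $T$ is a star-metric.
   Context: An ultrametric tree is a rooted tree with nonnegative edge lengths (zero lengths allowed) such that all leaves have the same distance from the root (the radius). The leaf distance matrix $D$ has $(i,j)$ entry the path-length distance between leaves $i,j$; $\mathbf{1}_{n\times n}$ is the all-ones matrix. The constant $c_T$ exists and satisfies $c_T\le 1-\frac1n$, since the set of such $c$ is closed and contains $1-\frac1n$ but not $0$. The height $H(v)$ of a vertex is the distance from $v$ to its furthest descendant, and $i\vee j$ is the lowest common ancestor of distinct vertices $i,j$. $T$ is leaf-positive if every edge adjacent to a leaf has positive length. $T$ is a star-metric if for any two distinct leaves $i,j$, $H(i\vee j)\in\{0,1\}$. *)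

theory Defs
  imports Complex_Main
begin

text \<open>A finite rooted tree with vertex set V, root r, parent map and
  edge lengths: len v is the length of the edge from v to its parent
  (for v distinct from the root).\<close>

definition rooted_tree :: "'v set \<Rightarrow> 'v \<Rightarrow> ('v \<Rightarrow> 'v) \<Rightarrow> bool" where
  "rooted_tree V r parent \<longleftrightarrow> finite V \<and> r \<in> V \<and> parent r = r \<and>
     (\<forall>v\<in>V. parent v \<in> V \<and> (\<exists>k. (parent ^^ k) v = r))"

definition ancestors :: "('v \<Rightarrow> 'v) \<Rightarrow> 'v \<Rightarrow> 'v set" where
  "ancestors parent v = {(parent ^^ k) v | k. True}"

text \<open>Edges on the path from v to the root, each edge identified with its lower endpoint.\<close>
definition path_edges :: "'v \<Rightarrow> ('v \<Rightarrow> 'v) \<Rightarrow> 'v \<Rightarrow> 'v set" where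
  "path_edges r parent v = {u \<in> ancestors parent v. u \<noteq> r}"

definition leaves :: "'v set \<Rightarrow> 'v \<Rightarrow> ('v \<Rightarrow> 'v) \<Rightarrow> 'v set" where
  "leaves V r parent = {v \<in> V. \<not> (\<exists>u\<in>V. u \<noteq> r \<and> parent u = v)}"

definition depth :: "'v \<Rightarrow> ('v \<Rightarrow> 'v) \<Rightarrow> ('v \<Rightarrow> real) \<Rightarrow> 'v \<Rightarrow> real" where
  "depth r parent len v = (\<Sum>e\<in>path_edges r parent v. len e)"

definition tdist :: "'v \<Rightarrow> ('v \<Rightarrow> 'v) \<Rightarrow> ('v \<Rightarrow> real) \<Rightarrow> 'v \<Rightarrow> 'v \<Rightarrow> real" where
  "tdist r parent len u w =
     (\<Sum>e\<in>path_edges r parent u - path_edges r parent w. len e) +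
     (\<Sum>e\<in>path_edges r parent w - path_edges r parent u. len e)"

definition ultrametric_tree :: "'v set \<Rightarrow> 'v \<Rightarrow> ('v \<Rightarrow> 'v) \<Rightarrow> ('v \<Rightarrow> real) \<Rightarrow> real \<Rightarrow> bool" where
  "ultrametric_tree V r parent len R \<longleftrightarrow> rooted_tree V r parent \<and>
     (\<forall>v\<in>V. v \<noteq> r \<longrightarrow> len v \<ge> 0) \<and>
     (\<forall>l\<in>leaves V r parent. depth r parent len l = R)"

definition leaf_positive :: "'v set \<Rightarrow> 'v \<Rightarrow> ('v \<Rightarrow> 'v) \<Rightarrow> ('v \<Rightarrow> real) \<Rightarrow> bool" where
  "leaf_positive V r parent len \<longleftrightarrow> (\<forall>l\<in>leaves V r parent. l \<noteq> r \<longrightarrow> len l > 0)"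

definition height :: "'v set \<Rightarrow> 'v \<Rightarrow> ('v \<Rightarrow> 'v) \<Rightarrow> ('v \<Rightarrow> real) \<Rightarrow> 'v \<Rightarrow> real" where
  "height V r parent len v = Max {tdist r parent len v u | u. u \<in> V \<and> v \<in> ancestors parent u}"

definition lca :: "('v \<Rightarrow> 'v) \<Rightarrow> 'v \<Rightarrow> 'v \<Rightarrow> 'v" where
  "lca parent i j = (THE u. u \<in> ancestors parent i \<inter> ancestors parent j \<and>
      (\<forall>w \<in> ancestors parent i \<inter> ancestors parent j. w \<in> ancestors parent u))"

definition star_metric :: "'v set \<Rightarrow> 'v \<Rightarrow> ('v \<Rightarrow> 'v) \<Rightarrow> ('v \<Rightarrow> real) \<Rightarrow> bool" where
  "star_metric V r parent len \<longleftrightarrow>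
     (\<forall>i\<in>leaves V r parent. \<forall>j\<in>leaves V r parent. i \<noteq> j \<longrightarrow>
        height V r parent len (lca parent i j) \<in> {0, 1})"

definition psd_on :: "'i set \<Rightarrow> ('i \<Rightarrow> 'i \<Rightarrow> real) \<Rightarrow> bool" where
  "psd_on I A \<longleftrightarrow> (\<forall>x :: 'i \<Rightarrow> real. (\<Sum>i\<in>I. \<Sum>j\<in>I. x i * A i j * x j) \<ge> 0)"

definition cT :: "'v set \<Rightarrow> 'v \<Rightarrow> ('v \<Rightarrow> 'v) \<Rightarrow> ('v \<Rightarrow> real) \<Rightarrow> real" where
  "cT V r parent len = Inf {c. c \<ge> 0 \<and>
      psd_on (leaves V r parent) (\<lambda>i j. c - tdist r parent len i j / 2)}"

end

theory Submission
  imports Defs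
begin


lemma funpow_in_V:
  assumes "rooted_tree V r parent" "v \<in> V"
  shows "(parent ^^ k) v \<in> V"
  using assms by (induction k) (auto simp: rooted_tree_def)

lemma anc_iff: "u \<in> ancestors parent v \<longleftrightarrow> (\<exists>k. u = (parent ^^ k) v)"
  by (auto simp: ancestors_def)

lemma ancestors_subset:
  assumes "rooted_tree V r parent" "v \<in> V"
  shows "ancestors parent v \<subseteq> V"
  using funpow_in_V[OF assms] by (auto simp: anc_iff)

lemma anc_self: "v \<in> ancestors parent v"
  unfolding anc_iff by (metis funpow_0)

lemma anc_parent: "parent v \<in> ancestors parent v"
  unfolding anc_iff by (metis funpow_0 funpow_Suc_right comp_apply)

lemma anc_trans: "u \<in> ancestors parent v \<Longrightarrow> w \<in> ancestors parent u \<Longrightarrow> w \<in> ancestors parent v"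
  unfolding anc_iff by (metis funpow_add comp_apply)

lemma root_fix:
  assumes "rooted_tree V r parent"
  shows "(parent ^^ j) r = r"
  using assms by (induction j) (auto simp: rooted_tree_def)

lemma anc_root: "rooted_tree V r parent \<Longrightarrow> ancestors parent r = {r}"
  using root_fix[of V r parent] by (auto simp: anc_iff)

lemma root_anc: "rooted_tree V r parent \<Longrightarrow> v \<in> V \<Longrightarrow> r \<in> ancestors parent v"
  by (auto simp: rooted_tree_def anc_iff)

lemma fix_is_root:
  assumes "rooted_tree V r parent" "v \<in> V" "(parent ^^ m) v = v" "m > 0"
  shows "v = r"
proof -
  obtain k where k: "(parent ^^ k) v = r" using assms(1,2) by (auto simp: rooted_tree_def)
  have per: "(parent ^^ (m * q)) v = v" for q
  proof (induction q)
    case 0 then show ?case by simp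
  next
    case (Suc q)
    have "(parent ^^ (m * Suc q)) v = (parent ^^ m) ((parent ^^ (m * q)) v)"
      by (simp add: funpow_add)
    then show ?case using Suc assms(3) by simp
  qed
  have "k \<le> m * k" using assms(4) by simp
  then have "(parent ^^ (m * k)) v = (parent ^^ (m * k - k)) ((parent ^^ k) v)"
    by (metis funpow_add comp_apply le_add_diff_inverse2)
  then have "(parent ^^ (m * k)) v = r" using k root_fix[OF assms(1)] by simp
  then show ?thesis using per by simp
qed

lemma anc_antisym:
  assumes "rooted_tree V r parent" "u \<in> V" "u \<in> ancestors parent w" "w \<in> ancestors parent u"
  shows "u = w"
proof -
  obtain a b where a: "u = (parent^^a) w" and b: "w = (parent^^b) u" using assms(3,4) by (auto simp: anc_iff)
  have "u = (parent^^(a+b)) u" using a b by (simp add: funpow_add)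
  show ?thesis
  proof (cases "a + b = 0")
    case True then show ?thesis using a by simp
  next
    case False
    then have "0 < a + b" by simp
    then have "u = r" using fix_is_root[OF assms(1,2) sym[OF \<open>u = (parent^^(a+b)) u\<close>]] by blast
    then show ?thesis using b root_fix[OF assms(1)] by simp
  qed
qed

lemma lca_props:
  assumes "rooted_tree V r parent" "v \<in> V" "w \<in> V"
  shows "lca parent v w \<in> ancestors parent v \<inter> ancestors parent w \<and>
     (\<forall>z \<in> ancestors parent v \<inter> ancestors parent w. z \<in> ancestors parent (lca parent v w))"
proof -
  let ?C = "ancestors parent v \<inter> ancestors parent w"
  have ex: "\<exists>k. (parent^^k) v \<in> ancestors parent w"
    using root_anc[OF assms(1,2)] root_anc[OF assms(1,3)] by (auto simp: anc_iff)
  define k where "k = (LEAST k. (parent^^k) v \<in> ancestors parent w)"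
  define u where "u = (parent^^k) v"
  have uC: "u \<in> ?C" using LeastI_ex[OF ex] by (auto simp: u_def k_def anc_iff)
  have ulow: "\<forall>z\<in>?C. z \<in> ancestors parent u"
  proof
    fix z assume "z \<in> ?C"
    then obtain m where m: "z = (parent^^m) v" and "z \<in> ancestors parent w" by (auto simp: anc_iff)
    then have "k \<le> m" unfolding k_def by (auto intro: Least_le)
    then have "z = (parent^^(m-k)) u" using m by (metis u_def funpow_add comp_apply le_add_diff_inverse2)
    then show "z \<in> ancestors parent u" by (auto simp: anc_iff)
  qed
  have uV: "u \<in> V" using uC ancestors_subset[OF assms(1,2)] by auto
  have "\<exists>!u. u \<in> ?C \<and> (\<forall>z\<in>?C. z \<in> ancestors parent u)"
  proof (rule ex1I[of _ u])
    show "u \<in> ?C \<and> (\<forall>z\<in>?C. z \<in> ancestors parent u)" using uC ulow by blast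
  next
    fix u' assume h: "u' \<in> ?C \<and> (\<forall>z\<in>?C. z \<in> ancestors parent u')"
    then have "u \<in> ancestors parent u'" "u' \<in> ancestors parent u" using uC ulow by auto
    then show "u' = u" using anc_antisym[OF assms(1) uV] by auto
  qed
  then show ?thesis unfolding lca_def by (rule theI')
qed

lemma leaf_below:
  assumes "rooted_tree V r parent" "u \<in> V"
  shows "\<exists>l\<in>leaves V r parent. u \<in> ancestors parent l"
  using assms(2)
proof (induction u rule: measure_induct_rule[where f="\<lambda>u. card V - card (ancestors parent u)"])
  case (less u)
  show ?case
  proof (cases "u \<in> leaves V r parent")
    case True then show ?thesis using anc_self[of u parent] by blast
  next
    case False
    then obtain c where c: "c \<in> V" "c \<noteq> r" "parent c = u" using less.prems by (auto simp: leaves_def)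
    have ac: "ancestors parent c = insert c (ancestors parent u)"
    proof (rule set_eqI, rule iffI)
      fix x assume "x \<in> ancestors parent c"
      then obtain k where k: "x = (parent^^k) c" by (auto simp: anc_iff)
      show "x \<in> insert c (ancestors parent u)"
      proof (cases k)
        case 0 then show ?thesis using k by simp
      next
        case (Suc j) then have "x = (parent^^j) u" using k c(3) by (simp only: funpow_Suc_right comp_apply)
        then show ?thesis by (auto simp: anc_iff)
      qed
    next
      fix x assume "x \<in> insert c (ancestors parent u)"
      then show "x \<in> ancestors parent c"
      proof
        assume "x = c" then show ?thesis using anc_self by simp
      next
        assume "x \<in> ancestors parent u"
        then obtain k where "x = (parent^^k) u" by (auto simp: anc_iff)
        then have "x = (parent^^(Suc k)) c" using c(3) by (simp only: funpow_Suc_right comp_apply)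
        then show ?thesis unfolding anc_iff by blast
      qed
    qed
    have uc: "u \<in> ancestors parent c" using anc_parent c(3) by metis
    have "c \<notin> ancestors parent u"
    proof
      assume "c \<in> ancestors parent u"
      then have "c = u" using anc_antisym[OF assms(1) c(1) _ uc] by simp
      then have "(parent ^^ 1) c = c" using c(3) by simp
      then show False using fix_is_root[OF assms(1) c(1) _ zero_less_one] c(2) by blast
    qed
    have finV: "finite V" using assms(1) by (simp add: rooted_tree_def)
    have fin: "finite (ancestors parent c)"
      using ancestors_subset[OF assms(1) c(1)] finV finite_subset by blast
    have "card (ancestors parent u) < card (ancestors parent c)"
      using ac \<open>c \<notin> ancestors parent u\<close> fin by simp
    moreover have "card (ancestors parent c) \<le> card V"
      using ancestors_subset[OF assms(1) c(1)] finV card_mono by blast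
    ultimately have "card V - card (ancestors parent c) < card V - card (ancestors parent u)"
      by linarith
    then obtain l where "l \<in> leaves V r parent" "c \<in> ancestors parent l" using less.IH[OF _ c(1)] by auto
    then show ?thesis using anc_trans[OF _ uc] by blast
  qed
qed


lemma path_edges_sub:
  "rooted_tree V r parent \<Longrightarrow> v \<in> V \<Longrightarrow> path_edges r parent v \<subseteq> V - {r}"
  using ancestors_subset[of V r parent v] by (auto simp: path_edges_def)

lemma finite_path_edges:
  "rooted_tree V r parent \<Longrightarrow> v \<in> V \<Longrightarrow> finite (path_edges r parent v)"
  using path_edges_sub[of V r parent v] by (meson finite_Diff finite_subset rooted_tree_def)

lemma path_edges_mono:
  "u \<in> ancestors parent v \<Longrightarrow> path_edges r parent u \<subseteq> path_edges r parent v"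
  using anc_trans[of u parent v] by (auto simp: path_edges_def)

lemma path_edges_root: "rooted_tree V r parent \<Longrightarrow> path_edges r parent r = {}"
  using anc_root[of V r parent] by (auto simp: path_edges_def)

lemma depth_diff:
  assumes "rooted_tree V r parent" "v \<in> V" "u \<in> ancestors parent v"
  shows "depth r parent len v = depth r parent len u + (\<Sum>e\<in>path_edges r parent v - path_edges r parent u. len e)"
  unfolding depth_def
  using sum.subset_diff[OF path_edges_mono[OF assms(3), of r] finite_path_edges[OF assms(1,2)], of len]
  by simp

lemma tdist_anc:
  assumes "rooted_tree V r parent" "v \<in> V" "u \<in> ancestors parent v"
  shows "tdist r parent len u v = depth r parent len v - depth r parent len u"
proof -
  have h: "path_edges r parent u - path_edges r parent v = {}"
    using path_edges_mono[OF assms(3), of r] by auto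
  have "tdist r parent len u v = sum len {} + sum len (path_edges r parent v - path_edges r parent u)"
    unfolding tdist_def by (simp only: h)
  then show ?thesis using depth_diff[OF assms, of len] by simp
qed

lemma diff_nonneg:
  assumes "ultrametric_tree V r parent len R" "v \<in> V" "u \<in> ancestors parent v"
  shows "depth r parent len u \<le> depth r parent len v"
proof -
  have rt: "rooted_tree V r parent" using assms(1) by (simp add: ultrametric_tree_def)
  have "(\<Sum>e\<in>path_edges r parent v - path_edges r parent u. len e) \<ge> 0"
    apply (rule sum_nonneg)
    using assms(1) path_edges_sub[OF rt assms(2)] by (auto simp: ultrametric_tree_def)
  then show ?thesis using depth_diff[OF rt assms(2,3), of len] by simp
qed

lemma depth_le_1:
  assumes "ultrametric_tree V r parent len 1" "v \<in> V"
  shows "depth r parent len v \<le> 1"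
proof -
  have rt: "rooted_tree V r parent" using assms(1) by (simp add: ultrametric_tree_def)
  obtain l where l: "l \<in> leaves V r parent" "v \<in> ancestors parent l" using leaf_below[OF rt assms(2)] by blast
  have "l \<in> V" using l(1) by (simp add: leaves_def)
  then have "depth r parent len v \<le> depth r parent len l" using diff_nonneg[OF assms(1) _ l(2)] by simp
  also have "\<dots> = 1" using assms(1) l(1) by (simp add: ultrametric_tree_def)
  finally show ?thesis .
qed

lemma height_eq:
  assumes "ultrametric_tree V r parent len 1" "v \<in> V"
  shows "height V r parent len v = 1 - depth r parent len v"
proof -
  have rt: "rooted_tree V r parent" using assms(1) by (simp add: ultrametric_tree_def)
  have finV: "finite V" using rt by (simp add: rooted_tree_def)
  have eq: "{tdist r parent len v u | u. u \<in> V \<and> v \<in> ancestors parent u}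
      = (\<lambda>u. tdist r parent len v u) ` {u \<in> V. v \<in> ancestors parent u}" by auto
  show ?thesis unfolding height_def eq
  proof (rule Max_eqI)
    show "finite ((\<lambda>u. tdist r parent len v u) ` {u \<in> V. v \<in> ancestors parent u})" using finV by simp
  next
    fix y assume "y \<in> (\<lambda>u. tdist r parent len v u) ` {u \<in> V. v \<in> ancestors parent u}"
    then obtain u where u: "u \<in> V" "v \<in> ancestors parent u" "y = tdist r parent len v u" by auto
    then show "y \<le> 1 - depth r parent len v"
      using tdist_anc[OF rt u(1,2), of len] depth_le_1[OF assms(1) u(1)] by simp
  next
    obtain l where l: "l \<in> leaves V r parent" "v \<in> ancestors parent l" using leaf_below[OF rt assms(2)] by blast
    have lV: "l \<in> V" using l(1) by (simp add: leaves_def)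
    have "tdist r parent len v l = 1 - depth r parent len v"
      using tdist_anc[OF rt lV l(2), of len] assms(1) l(1) by (simp add: ultrametric_tree_def)
    then show "1 - depth r parent len v \<in> (\<lambda>u. tdist r parent len v u) ` {u \<in> V. v \<in> ancestors parent u}"
      using lV l(2) by force
  qed
qed

lemma leaf_not_anc:
  assumes "rooted_tree V r parent" "i \<in> leaves V r parent" "j \<in> V" "i \<noteq> j" "i \<noteq> r"
  shows "i \<notin> ancestors parent j"
proof
  assume "i \<in> ancestors parent j"
  then obtain k where k: "i = (parent^^k) j" by (auto simp: anc_iff)
  show False
  proof (cases k)
    case 0 then show ?thesis using k assms(4) by simp
  next
    case (Suc m)
    define c where "c = (parent^^m) j"
    have cV: "c \<in> V" using funpow_in_V[OF assms(1,3)] c_def by simp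
    have pc: "parent c = i" using k Suc c_def by simp
    show False
    proof (cases "c = r")
      case True then show ?thesis using pc assms(1,5) by (simp add: rooted_tree_def)
    next
      case False then show ?thesis using pc cV assms(2) by (auto simp: leaves_def)
    qed
  qed
qed

lemma lca_path:
  assumes "rooted_tree V r parent" "v \<in> V" "w \<in> V"
  shows "path_edges r parent (lca parent v w) = path_edges r parent v \<inter> path_edges r parent w"
proof -
  note lp = lca_props[OF assms]
  have l1: "lca parent v w \<in> ancestors parent v" "lca parent v w \<in> ancestors parent w" using lp by auto
  have l2: "\<And>z. z \<in> ancestors parent v \<Longrightarrow> z \<in> ancestors parent w \<Longrightarrow> z \<in> ancestors parent (lca parent v w)"
    using lp by auto
  show ?thesis
  proof (rule set_eqI)
    fix e
    show "e \<in> path_edges r parent (lca parent v w) \<longleftrightarrow> e \<in> path_edges r parent v \<inter> path_edges r parent w"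
      unfolding path_edges_def mem_Collect_eq Int_iff
      using l1 l2 anc_trans[OF l1(1), of e] anc_trans[OF l1(2), of e] by metis
  qed
qed



lemma cs_weighted:
  fixes w X :: "'e \<Rightarrow> real"
  assumes "finite E" "\<And>e. e \<in> E \<Longrightarrow> w e \<ge> 0" "(\<Sum>e\<in>E. w e) > 0"
  shows "(\<Sum>e\<in>E. w e * X e)^2 \<le> (\<Sum>e\<in>E. w e) * (\<Sum>e\<in>E. w e * (X e)^2)"
proof -
  define S where "S = (\<Sum>e\<in>E. w e * X e)"
  define L where "L = (\<Sum>e\<in>E. w e)"
  define Q where "Q = (\<Sum>e\<in>E. w e * (X e)^2)"
  have "0 \<le> (\<Sum>e\<in>E. w e * (L * X e - S)^2)"
    using assms(2) by (intro sum_nonneg) simp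
  also have "\<dots> = (\<Sum>e\<in>E. L^2 * (w e * (X e)^2) - (2 * L * S) * (w e * X e) + S^2 * w e)"
    by (rule sum.cong) (simp_all add: power2_eq_square algebra_simps)
  also have "\<dots> = L^2 * Q - (2 * L * S) * S + S^2 * L"
    by (simp add: sum.distrib sum_subtractf sum_distrib_left[symmetric] S_def L_def Q_def)
  also have "\<dots> = L * (L * Q - S^2)" by (simp add: power2_eq_square algebra_simps)
  finally have "0 \<le> L * (L * Q - S^2)" .
  then have "0 \<le> L * Q - S^2" using assms(3) L_def by (simp add: zero_le_mult_iff)
  then show ?thesis unfolding S_def L_def Q_def by simp
qed


lemma quad_swap:
  fixes x :: "'i \<Rightarrow> real" and w :: "'e \<Rightarrow> real" and a :: "'e \<Rightarrow> 'i \<Rightarrow> real"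
  shows "(\<Sum>i\<in>I. \<Sum>j\<in>I. x i * x j * (\<Sum>e\<in>E. w e * a e i * a e j))
     = (\<Sum>e\<in>E. w e * (\<Sum>i\<in>I. x i * a e i)^2)"
proof -
  have "(\<Sum>e\<in>E. w e * (\<Sum>i\<in>I. x i * a e i)^2) = (\<Sum>e\<in>E. \<Sum>i\<in>I. \<Sum>j\<in>I. x i * x j * (w e * a e i * a e j))"
    by (simp add: power2_eq_square sum_product sum_distrib_left mult_ac)
  also have "\<dots> = (\<Sum>i\<in>I. \<Sum>e\<in>E. \<Sum>j\<in>I. x i * x j * (w e * a e i * a e j))"
    by (rule sum.swap)
  also have "\<dots> = (\<Sum>i\<in>I. \<Sum>j\<in>I. \<Sum>e\<in>E. x i * x j * (w e * a e i * a e j))"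
    by (rule sum.cong[OF refl], rule sum.swap)
  also have "\<dots> = (\<Sum>i\<in>I. \<Sum>j\<in>I. x i * x j * (\<Sum>e\<in>E. w e * a e i * a e j))"
    by (simp add: sum_distrib_left)
  finally show ?thesis by simp
qed

lemma lin_swap:
  fixes x :: "'i \<Rightarrow> real" and w :: "'e \<Rightarrow> real" and a :: "'e \<Rightarrow> 'i \<Rightarrow> real"
  shows "(\<Sum>i\<in>I. x i * (\<Sum>e\<in>E. w e * a e i)) = (\<Sum>e\<in>E. w e * (\<Sum>i\<in>I. x i * a e i))"
proof -
  have "(\<Sum>i\<in>I. x i * (\<Sum>e\<in>E. w e * a e i)) = (\<Sum>i\<in>I. \<Sum>e\<in>E. w e * (x i * a e i))"
    by (simp add: sum_distrib_left mult_ac)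
  also have "\<dots> = (\<Sum>e\<in>E. \<Sum>i\<in>I. w e * (x i * a e i))" by (rule sum.swap)
  also have "\<dots> = (\<Sum>e\<in>E. w e * (\<Sum>i\<in>I. x i * a e i))" by (simp add: sum_distrib_left)
  finally show ?thesis .
qed

theorem proposition2p3:
  fixes V :: "'v set" and r :: 'v and parent :: "'v \<Rightarrow> 'v" and len :: "'v \<Rightarrow> real"
  assumes "ultrametric_tree V r parent len 1"
    and "leaf_positive V r parent len"
  shows "cT V r parent len = 1 - 1 / real (card (leaves V r parent))
     \<longleftrightarrow> star_metric V r parent len"
proof -
  have rt: "rooted_tree V r parent" using assms(1) by (simp add: ultrametric_tree_def)
  have nn: "\<And>v. v \<in> V \<Longrightarrow> v \<noteq> r \<Longrightarrow> len v \<ge> 0" using assms(1) by (simp add: ultrametric_tree_def)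
  have dl: "\<And>l. l \<in> leaves V r parent \<Longrightarrow> depth r parent len l = 1"
    using assms(1) by (simp add: ultrametric_tree_def)
  define Lv where "Lv = leaves V r parent"
  define P where "P = path_edges r parent"
  define A where "A i j = (\<Sum>e\<in>P i \<inter> P j. len e)" for i j
  define E where "E = (\<Union>i\<in>Lv. P i)"
  define n where "n = card Lv"
  define L where "L = (\<Sum>e\<in>E. len e)"
  define ind where "ind e i = (if e \<in> P i then 1 else (0::real))" for e i
  have finV: "finite V" using rt by (simp add: rooted_tree_def)
  have LvV: "Lv \<subseteq> V" by (auto simp: Lv_def leaves_def)
  have finLv: "finite Lv" using finV LvV finite_subset by blast
  have PV: "\<And>v. v \<in> V \<Longrightarrow> P v \<subseteq> V - {r}" unfolding P_def using path_edges_sub[OF rt] by blast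
  have finP: "\<And>v. v \<in> V \<Longrightarrow> finite (P v)" unfolding P_def using finite_path_edges[OF rt] by blast
  have EV: "E \<subseteq> V - {r}" unfolding E_def using PV LvV by blast
  have finE: "finite E" using EV finV finite_subset by blast
  have lenE: "\<And>e. e \<in> E \<Longrightarrow> len e \<ge> 0" using EV nn by blast
  have PE: "\<And>i. i \<in> Lv \<Longrightarrow> P i \<subseteq> E" unfolding E_def by blast
  have sumP: "\<And>i. i \<in> Lv \<Longrightarrow> (\<Sum>e\<in>P i. len e) = 1"
    using dl unfolding Lv_def P_def depth_def by simp
  have Aii: "\<And>i. i \<in> Lv \<Longrightarrow> A i i = 1" unfolding A_def using sumP by simp
  have tdA: "\<And>i j. i\<in>Lv \<Longrightarrow> j\<in>Lv \<Longrightarrow> tdist r parent len i j = 2 - 2 * A i j"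
  proof -
    fix i j assume ij: "i \<in> Lv" "j \<in> Lv"
    have "(\<Sum>e\<in>P i. len e) = (\<Sum>e\<in>P i \<inter> P j. len e) + (\<Sum>e\<in>P i - P j. len e)"
      by (rule sum.Int_Diff) (use finP LvV ij in blast)
    moreover have "(\<Sum>e\<in>P j. len e) = (\<Sum>e\<in>P j \<inter> P i. len e) + (\<Sum>e\<in>P j - P i. len e)"
      by (rule sum.Int_Diff) (use finP LvV ij in blast)
    moreover have "P j \<inter> P i = P i \<inter> P j" by blast
    ultimately show "tdist r parent len i j = 2 - 2 * A i j"
      unfolding tdist_def A_def P_def[symmetric] using sumP ij by simp
  qed
  have Aind: "\<And>i j. i\<in>Lv \<Longrightarrow> j\<in>Lv \<Longrightarrow> A i j = (\<Sum>e\<in>E. len e * ind e i * ind e j)"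
  proof -
    fix i j assume ij: "i \<in> Lv" "j \<in> Lv"
    have "E \<inter> (P i \<inter> P j) = P i \<inter> P j" using PE ij by blast
    then have "A i j = (\<Sum>e\<in>E \<inter> (P i \<inter> P j). len e)" by (simp add: A_def)
    also have "\<dots> = (\<Sum>e\<in>E. if e \<in> P i \<inter> P j then len e else 0)"
      by (rule sum.inter_restrict[OF finE])
    also have "\<dots> = (\<Sum>e\<in>E. len e * ind e i * ind e j)"
      by (rule sum.cong) (auto simp: ind_def)
    finally show "A i j = (\<Sum>e\<in>E. len e * ind e i * ind e j)" .
  qed
  have Pind: "\<And>i. i\<in>Lv \<Longrightarrow> (\<Sum>e\<in>E. len e * ind e i) = 1"
  proof -
    fix i assume i: "i \<in> Lv"
    have "(\<Sum>e\<in>E. len e * ind e i) = (\<Sum>e\<in>E. if e \<in> P i then len e else 0)"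
      by (rule sum.cong) (auto simp: ind_def)
    also have "\<dots> = (\<Sum>e\<in>E \<inter> P i. len e)" by (rule sum.inter_restrict[OF finE, symmetric])
    also have "E \<inter> P i = P i" using PE i by blast
    finally show "(\<Sum>e\<in>E. len e * ind e i) = 1" using sumP i by simp
  qed
  have Lvne: "Lv \<noteq> {}"
    using leaf_below[OF rt, of r] rt unfolding Lv_def rooted_tree_def by blast
  have n1: "real n \<ge> 1" using Lvne finLv unfolding n_def
    by (simp add: Suc_leI card_gt_0_iff)
  have L1: "L \<ge> 1"
  proof -
    obtain i where i: "i \<in> Lv" using Lvne by blast
    have "(\<Sum>e\<in>P i. len e) \<le> L" unfolding L_def
      by (rule sum_mono2[OF finE PE[OF i]]) (use lenE in blast)
    then show ?thesis using sumP i by simp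
  qed
  define N where "N e = card {i\<in>Lv. e \<in> P i}" for e
  have nL: "real n = (\<Sum>e\<in>E. len e * real (N e))"
  proof -
    have "real n = (\<Sum>i\<in>Lv. (\<Sum>e\<in>E. len e * ind e i))" using Pind unfolding n_def by simp
    also have "\<dots> = (\<Sum>e\<in>E. \<Sum>i\<in>Lv. len e * ind e i)" by (rule sum.swap)
    also have "\<dots> = (\<Sum>e\<in>E. len e * real (N e))"
    proof (rule sum.cong[OF refl])
      fix e assume "e \<in> E"
      have "(\<Sum>i\<in>Lv. len e * ind e i) = len e * (\<Sum>i\<in>Lv. if e \<in> P i then 1 else 0)"
        by (simp add: sum_distrib_left ind_def)
      also have "(\<Sum>i\<in>Lv. if e \<in> P i then 1 else (0::real)) = real (N e)"
        unfolding N_def using sum.inter_filter[OF finLv, of "\<lambda>_. (1::real)" "\<lambda>i. e \<in> P i"] by simp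
      finally show "(\<Sum>i\<in>Lv. len e * ind e i) = len e * real (N e)" .
    qed
    finally show ?thesis .
  qed
  have Npos: "\<And>e. e \<in> E \<Longrightarrow> N e \<ge> 1"
  proof -
    fix e assume "e \<in> E"
    then obtain i where "i \<in> Lv" "e \<in> P i" unfolding E_def by blast
    then have "{i\<in>Lv. e \<in> P i} \<noteq> {}" by blast
    then show "N e \<ge> 1" unfolding N_def using finLv by (simp add: Suc_leI card_gt_0_iff)
  qed
  have Ln: "L \<le> real n"
    unfolding nL L_def
  proof (rule sum_mono)
    fix e assume e: "e \<in> E"
    have h1: "1 \<le> real (N e)" using Npos[OF e] by simp
    show "len e \<le> len e * real (N e)" using mult_left_mono[OF h1 lenE[OF e]] by simp
  qed
  define X where "X x e = (\<Sum>i\<in>Lv. x i * ind e i)" for x :: "'v \<Rightarrow> real" and e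
  have quad: "\<And>x c. (\<Sum>i\<in>Lv. \<Sum>j\<in>Lv. x i * (c - tdist r parent len i j / 2) * x j)
      = (c - 1) * (\<Sum>i\<in>Lv. x i)^2 + (\<Sum>e\<in>E. len e * (X x e)^2)"
  proof -
    fix x :: "'v \<Rightarrow> real" and c :: real
    have "(\<Sum>i\<in>Lv. \<Sum>j\<in>Lv. x i * (c - tdist r parent len i j / 2) * x j)
       = (\<Sum>i\<in>Lv. \<Sum>j\<in>Lv. (c - 1) * (x i * x j) + x i * x j * A i j)"
      by (intro sum.cong refl) (simp add: tdA field_simps)
    also have "\<dots> = (\<Sum>i\<in>Lv. \<Sum>j\<in>Lv. (c - 1) * (x i * x j) + x i * x j * (\<Sum>e\<in>E. len e * ind e i * ind e j))"
      by (intro sum.cong refl) (simp add: Aind)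
    also have "\<dots> = (c - 1) * (\<Sum>i\<in>Lv. \<Sum>j\<in>Lv. x i * x j)
        + (\<Sum>i\<in>Lv. \<Sum>j\<in>Lv. x i * x j * (\<Sum>e\<in>E. len e * ind e i * ind e j))"
      by (simp add: sum.distrib sum_distrib_left)
    also have "(\<Sum>i\<in>Lv. \<Sum>j\<in>Lv. x i * x j) = (\<Sum>i\<in>Lv. x i)^2"
      by (simp add: power2_eq_square sum_product)
    also have "(\<Sum>i\<in>Lv. \<Sum>j\<in>Lv. x i * x j * (\<Sum>e\<in>E. len e * ind e i * ind e j)) = (\<Sum>e\<in>E. len e * (X x e)^2)"
      unfolding X_def by (rule quad_swap)
    finally show "(\<Sum>i\<in>Lv. \<Sum>j\<in>Lv. x i * (c - tdist r parent len i j / 2) * x j)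
      = (c - 1) * (\<Sum>i\<in>Lv. x i)^2 + (\<Sum>e\<in>E. len e * (X x e)^2)" .
  qed
  have Sform: "\<And>x. (\<Sum>i\<in>Lv. x i) = (\<Sum>e\<in>E. len e * X x e)"
  proof -
    fix x :: "'v \<Rightarrow> real"
    have "(\<Sum>i\<in>Lv. x i) = (\<Sum>i\<in>Lv. x i * (\<Sum>e\<in>E. len e * ind e i))"
      by (rule sum.cong) (simp_all add: Pind)
    also have "\<dots> = (\<Sum>e\<in>E. len e * X x e)" unfolding X_def by (rule lin_swap)
    finally show "(\<Sum>i\<in>Lv. x i) = (\<Sum>e\<in>E. len e * X x e)" .
  qed
  define Cset where "Cset = {c. c \<ge> 0 \<and> psd_on Lv (\<lambda>i j. c - tdist r parent len i j / 2)}"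
  have cTeq: "cT V r parent len = Inf Cset" unfolding cT_def Cset_def Lv_def ..
  have bdd: "bdd_below Cset" unfolding Cset_def by (rule bdd_belowI[of _ 0]) auto
  have mem: "\<And>c. c \<ge> 0 \<Longrightarrow> c \<ge> 1 - 1 / L \<Longrightarrow> c \<in> Cset"
  proof -
    fix c :: real assume c0: "c \<ge> 0" and cL: "c \<ge> 1 - 1 / L"
    have "psd_on Lv (\<lambda>i j. c - tdist r parent len i j / 2)"
      unfolding psd_on_def
    proof
      fix x :: "'v \<Rightarrow> real"
      define S where "S = (\<Sum>i\<in>Lv. x i)"
      define Q where "Q = (\<Sum>e\<in>E. len e * (X x e)^2)"
      have "S^2 \<le> L * Q" unfolding S_def Q_def L_def Sform
        by (rule cs_weighted[OF finE]) (use lenE L1 L_def in auto)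
      then have QL: "S^2 / L \<le> Q" using L1 by (simp add: divide_le_eq mult.commute)
      have "0 \<le> (c - 1 + 1 / L) * S^2" using cL by simp
      also have "\<dots> = (c - 1) * S^2 + S^2 / L" by (simp add: algebra_simps)
      also have "\<dots> \<le> (c - 1) * S^2 + Q" using QL by simp
      finally show "0 \<le> (\<Sum>i\<in>Lv. \<Sum>j\<in>Lv. x i * (c - tdist r parent len i j / 2) * x j)"
        unfolding quad S_def Q_def .
    qed
    then show "c \<in> Cset" using c0 unfolding Cset_def by simp
  qed
  have lenpos: "\<And>i. i \<in> Lv \<Longrightarrow> i \<noteq> r \<Longrightarrow> len i > 0"
    using assms(2) unfolding leaf_positive_def Lv_def by blast
  have notr: "\<And>i. i \<in> Lv \<Longrightarrow> i \<noteq> r"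
  proof
    fix i assume "i \<in> Lv" "i = r"
    then have "depth r parent len r = 1" using dl Lv_def by simp
    then show False using path_edges_root[OF rt] by (simp add: depth_def)
  qed
  have Anonneg: "\<And>i j. i \<in> Lv \<Longrightarrow> A i j \<ge> 0"
    unfolding A_def using PE lenE by (meson IntD1 subsetD sum_nonneg)
  have Aless: "\<And>i j. i \<in> Lv \<Longrightarrow> j \<in> Lv \<Longrightarrow> i \<noteq> j \<Longrightarrow> A i j < 1"
  proof -
    fix i j assume ij: "i \<in> Lv" "j \<in> Lv" "i \<noteq> j"
    have iV: "i \<in> V" "j \<in> V" using ij LvV by auto
    have "i \<notin> ancestors parent j" using leaf_not_anc[OF rt _ iV(2) ij(3) notr[OF ij(1)]] ij(1) Lv_def by simp
    then have iin: "i \<in> P i - P j" using anc_self[of i parent] notr[OF ij(1)] unfolding P_def path_edges_def by simp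
    have "(\<Sum>e\<in>P i. len e) = (\<Sum>e\<in>P i \<inter> P j. len e) + (\<Sum>e\<in>P i - P j. len e)"
      by (rule sum.Int_Diff) (use finP iV in blast)
    moreover have "len i \<le> (\<Sum>e\<in>P i - P j. len e)"
      by (rule member_le_sum[OF iin]) (use finP iV PE ij lenE in auto)
    ultimately show "A i j < 1" using sumP[OF ij(1)] lenpos[OF ij(1) notr[OF ij(1)]] unfolding A_def by linarith
  qed
  have heightA: "\<And>i j. i\<in>Lv \<Longrightarrow> j\<in>Lv \<Longrightarrow> height V r parent len (lca parent i j) = 1 - A i j"
  proof -
    fix i j assume ij: "i \<in> Lv" "j \<in> Lv"
    have iV: "i \<in> V" "j \<in> V" using ij LvV by auto
    have "lca parent i j \<in> V" using lca_props[OF rt iV] ancestors_subset[OF rt iV(1)] by blast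
    then show "height V r parent len (lca parent i j) = 1 - A i j"
      using height_eq[OF assms(1)] lca_path[OF rt iV] unfolding A_def P_def depth_def by simp
  qed
  have star_iff: "star_metric V r parent len \<longleftrightarrow> (\<forall>i\<in>Lv. \<forall>j\<in>Lv. i \<noteq> j \<longrightarrow> A i j = 0)"
  proof -
    have "\<And>i j. i\<in>Lv \<Longrightarrow> j\<in>Lv \<Longrightarrow> i \<noteq> j \<Longrightarrow>
         height V r parent len (lca parent i j) \<in> {0, 1} \<longleftrightarrow> A i j = 0"
      using heightA Aless by force
    then show ?thesis unfolding star_metric_def Lv_def[symmetric] by blast
  qed
  show ?thesis
  proof (cases "\<forall>i\<in>Lv. \<forall>j\<in>Lv. i \<noteq> j \<longrightarrow> A i j = 0")
    case True
    have low: "\<And>c. c \<in> Cset \<Longrightarrow> 1 - 1 / real n \<le> c"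
    proof -
      fix c assume "c \<in> Cset"
      then have "0 \<le> (\<Sum>i\<in>Lv. \<Sum>j\<in>Lv. 1 * (c - tdist r parent len i j / 2) * 1)"
      proof -
        have "psd_on Lv (\<lambda>i j. c - tdist r parent len i j / 2)" using \<open>c \<in> Cset\<close> unfolding Cset_def by simp
        then have "\<forall>x. 0 \<le> (\<Sum>i\<in>Lv. \<Sum>j\<in>Lv. x i * (c - tdist r parent len i j / 2) * x j)"
          unfolding psd_on_def .
        from spec[OF this, of "\<lambda>_. (1::real)"] show ?thesis by simp
      qed
      also have "\<dots> = (\<Sum>i\<in>Lv. real n * (c - 1) + 1)"
      proof (rule sum.cong[OF refl])
        fix i assume i: "i \<in> Lv"
        have "(\<Sum>j\<in>Lv. 1 * (c - tdist r parent len i j / 2) * 1) = (\<Sum>j\<in>Lv. (c - 1) + (if i = j then 1 else 0))"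
          by (rule sum.cong[OF refl]) (use tdA i True Aii in auto)
        also have "\<dots> = real n * (c - 1) + 1" using i finLv by (simp add: sum.distrib n_def)
        finally show "(\<Sum>j\<in>Lv. 1 * (c - tdist r parent len i j / 2) * 1) = real n * (c - 1) + 1" .
      qed
      also have "\<dots> = real n * (real n * (c - 1) + 1)" by (simp add: n_def)
      finally have "0 \<le> real n * (c - 1) + 1" using n1 by (simp add: zero_le_mult_iff)
      then show "1 - 1 / real n \<le> c" using n1 by (simp add: field_simps)
    qed
    have "1 / real n \<le> 1 / L" using Ln L1 by (simp add: frac_le)
    then have "1 - 1 / real n \<in> Cset" using n1 by (intro mem) simp_all
    then have "Inf Cset = 1 - 1 / real n" using low by (rule cInf_eq_minimum)
    then show ?thesis using star_iff True cTeq n_def Lv_def by simp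
  next
    case False
    then obtain i j where ij: "i \<in> Lv" "j \<in> Lv" "i \<noteq> j" "A i j \<noteq> 0" by blast
    have "A i j > 0" using Anonneg[OF ij(1), of j] ij(4) by simp
    then obtain e where e: "e \<in> P i \<inter> P j" "len e > 0"
      unfolding A_def by (meson not_le sum_nonpos)
    have eE: "e \<in> E" using e PE ij by blast
    have "{i, j} \<subseteq> {k\<in>Lv. e \<in> P k}" using e ij by auto
    then have "card {i, j} \<le> N e" unfolding N_def using finLv by (intro card_mono) auto
    then have N2: "N e \<ge> 2" using ij(3) by simp
    have "L < real n" unfolding nL L_def
    proof (rule sum_strict_mono_ex1[OF finE])
      show "\<forall>x\<in>E. len x \<le> len x * real (N x)"
      proof
        fix e assume e: "e \<in> E"
        have h1: "1 \<le> real (N e)" using Npos[OF e] by simp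
        show "len e \<le> len e * real (N e)" using mult_left_mono[OF h1 lenE[OF e]] by simp
      qed
      show "\<exists>a\<in>E. len a < len a * real (N a)"
        using eE e(2) N2 by (intro bexI[of _ e]) simp_all
    qed
    then have lt: "1 / real n < 1 / L" using L1 by (simp add: frac_less2)
    have "1 - 1 / L \<in> Cset" using L1 by (intro mem) simp_all
    then have "Inf Cset \<le> 1 - 1 / L" using bdd by (rule cInf_lower)
    then have "cT V r parent len \<noteq> 1 - 1 / real (card (leaves V r parent))"
      using lt cTeq n_def Lv_def by simp
    then show ?thesis using star_iff False by simp
  qed
qed

end
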